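(* Let $R$ be a regular ring with unity, let $E$ be the biordered set of idempotents of $R$, and for $e\in E$ put $e'=1-e$. If $e,f\in E$ satisfy $f\,\omega\,e'$, then there is exactly one element of $E$ that belongs to both sandwich sets $S(e',f')$ and $S(f',e')$.
   Context: A ring is regular if for every $x$ there is $y$ with $xyx=x$. The biordered set $E$ of $R$ is the set of idempotents with the partial product $ef$ (computed in $R$) defined when $\{ef,fe\}\cap\{e,f\}\ne\emptyset$. In $E$: $f\,\omega^l\,e$ iff $fe=f$; $f\,\omega^r\,e$ iff $ef=f$; $\omega=\omega^l\cap\omega^r$; $M(e,f)=\{g\in E: ge=g,\ fg=g\}$; for $g,h\in M(e,f)$, $g\preceq h$ iff $eg\,\omega^r\,eh$ and $gf\,\omega^l\,hf$; and $S(e,f)=\{h\in M(e,f): g\preceq h\text{ for all }g\in M(e,f)\}$. *)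

theory Defs
  imports Main
begin

definition regular_ring :: "'a::ring_1 itself \<Rightarrow> bool" where
  "regular_ring _ \<longleftrightarrow> (\<forall>x::'a. \<exists>y. x * y * x = x)"

definition idems :: "'a::ring_1 set" where
  "idems = {e. e * e = e}"

definition omega_l :: "'a::ring_1 \<Rightarrow> 'a \<Rightarrow> bool" where
  "omega_l f e \<longleftrightarrow> f \<in> idems \<and> e \<in> idems \<and> f * e = f"

definition omega_r :: "'a::ring_1 \<Rightarrow> 'a \<Rightarrow> bool" where
  "omega_r f e \<longleftrightarrow> f \<in> idems \<and> e \<in> idems \<and> e * f = f"

definition omega :: "'a::ring_1 \<Rightarrow> 'a \<Rightarrow> bool" where
  "omega f e \<longleftrightarrow> omega_l f e \<and> omega_r f e"

definition Mset :: "'a::ring_1 \<Rightarrow> 'a \<Rightarrow> 'a set" where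
  "Mset e f = {g \<in> idems. g * e = g \<and> f * g = g}"

definition sand_le :: "'a::ring_1 \<Rightarrow> 'a \<Rightarrow> 'a \<Rightarrow> 'a \<Rightarrow> bool" where
  "sand_le e f g h \<longleftrightarrow> omega_r (e * g) (e * h) \<and> omega_l (g * f) (h * f)"

definition Sset :: "'a::ring_1 \<Rightarrow> 'a \<Rightarrow> 'a set" where
  "Sset e f = {h \<in> Mset e f. \<forall>g \<in> Mset e f. sand_le e f g h}"

end

theory Submission
  imports Defs
begin

lemma prod_in_S:
  fixes a b :: "'a::ring_1"
  assumes a: "a * a = a" and b: "b * b = b" and c: "a * b = b * a"
  shows "a * b \<in> Sset a b"
proof -
  have abi: "a * b * (a * b) = a * b"
    by (metis a b c mult.assoc)
  have abM: "a * b \<in> Mset a b"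
    proof -
    have "a * b * a = a * b" by (metis a c mult.assoc)
    moreover have "b * (a * b) = a * b" by (metis b c mult.assoc)
    ultimately show ?thesis unfolding Mset_def idems_def using abi by simp
  qed
  have "sand_le a b g (a * b)" if g: "g \<in> Mset a b" for g
  proof -
    from g have gg: "g * g = g" and ga: "g * a = g" and bg: "b * g = g"
      unfolding Mset_def idems_def by auto
    have 1: "a * g * (a * g) = a * g" by (metis ga gg mult.assoc)
    have 2: "a * (a * b) = a * b" by (metis a mult.assoc)
    have 3: "a * (a * b) * (a * g) = a * g"
      by (metis 2 ga bg a c mult.assoc)
    have 4: "g * b * (g * b) = g * b" by (metis bg gg mult.assoc)
    have 5: "a * b * b = a * b" by (metis b mult.assoc)
    have 6: "g * b * (a * b * b) = g * b"
      by (metis 5 ga bg b c mult.assoc)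
    show ?thesis unfolding sand_le_def omega_r_def omega_l_def idems_def
      using 1 2 3 4 5 6 abi by simp
  qed
  then show ?thesis unfolding Sset_def using abM by auto
qed

theorem proposition2p4:
  fixes e f :: "'a::ring_1"
  assumes "regular_ring TYPE('a)"
    and "e \<in> idems" and "f \<in> idems"
    and "omega f (1 - e)"
  shows "\<exists>!h. h \<in> Sset (1 - e) (1 - f) \<and> h \<in> Sset (1 - f) (1 - e)"
proof -
  have ee: "e * e = e" and ff: "f * f = f" using assms(2,3) by (auto simp: idems_def)
  have fe: "f * (1 - e) = f" and ef: "(1 - e) * f = f"
    using assms(4) by (auto simp: omega_def omega_l_def omega_r_def)
  have fe0: "f * e = 0" using fe by (simp add: algebra_simps)
  have ef0: "e * f = 0" using ef by (simp add: algebra_simps)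
  let ?a = "1 - e" and ?b = "1 - f"
  have a: "?a * ?a = ?a" using ee by (simp add: algebra_simps)
  have b: "?b * ?b = ?b" using ff by (simp add: algebra_simps)
  have c: "?a * ?b = ?b * ?a" using ef0 fe0 by (simp add: algebra_simps)
  have h1: "?a * ?b \<in> Sset ?a ?b" by (rule prod_in_S[OF a b c])
  have h2: "?a * ?b \<in> Sset ?b ?a" unfolding c by (rule prod_in_S[OF b a c[symmetric]])
  show ?thesis
  proof (rule ex1I[of _ "?a * ?b"])
    show "?a * ?b \<in> Sset ?a ?b \<and> ?a * ?b \<in> Sset ?b ?a" using h1 h2 by simp
  next
    fix k assume k: "k \<in> Sset ?a ?b \<and> k \<in> Sset ?b ?a"
    have ka: "k * ?a = k" and bk: "?b * k = k" and kb: "k * ?b = k" and ak: "?a * k = k"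
      using k unfolding Sset_def Mset_def by auto
    have hM: "?a * ?b \<in> Mset ?a ?b" using h1 unfolding Sset_def by auto
    have "sand_le ?a ?b k (?a * ?b)" using h1 k unfolding Sset_def by auto
    then have "?a * (?a * ?b) * (?a * k) = ?a * k" unfolding sand_le_def omega_r_def by auto
    then have hk: "?a * ?b * k = k" using a ak by (metis mult.assoc)
    have "sand_le ?a ?b (?a * ?b) k" using hM k unfolding Sset_def by auto
    then have "?a * k * (?a * (?a * ?b)) = ?a * (?a * ?b)" unfolding sand_le_def omega_r_def by auto
    then have kh: "k * (?a * ?b) = ?a * ?b" using a ak by (metis mult.assoc)
    have "k * (?a * ?b) = k" using ka kb by (metis mult.assoc)
    with kh have "k = ?a * ?b" by simp
    then show "k = ?a * ?b" .
  qed
qed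

end
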